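(* Let $f_\gamma$, $N$, $D$ be as in the context and fix $\gamma\in\mathbb{R}$ such that $f_\gamma$ is positive definite. For each positive integer $r$ define the form in $(v,w)\in\mathbb{R}^{2N}$ $$p_{\gamma,r}(v,w)=f_\gamma(v^2-w^2)-\tfrac1r\Big(\sum_{i=1}^N(v_i^2-w_i^2)^2\Big)^D+\tfrac{1}{2r}\Big(\sum_{i=1}^N(v_i^4+w_i^4)\Big)^D,$$ let $q_{\gamma,r}(v,w)=p_{\gamma,r}(\sqrt{v_1},\dots,\sqrt{v_N},\sqrt{w_1},\dots,\sqrt{w_N})$ (a form of degree $2D$), and, whenever $\mu_r:=\min_{\|(v,w)\|_2=1}p_{\gamma,r}(v,w)>0$, let $\bar N(r)=D(2D-1)\frac{\|q_{\gamma,r}\|}{\mu_r}-2D$. Then there exists a positive integer $\hat r$ such that for all integers $r\ge\hat r$ we have $\mu_r>0$ and $r^2\ge\bar N(r)$.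
   Context: Let $p,g_1,\dots,g_m$ be real polynomials in $x=(x_1,\dots,x_n)$ and let $S=\{x\in\mathbb{R}^n : g_i(x)\ge 0,\ i=1,\dots,m\}$. Let $d\ge 1$ be the integer such that $2d$ is the smallest even integer larger than or equal to the maximum of the degrees of $p,g_1,\dots,g_m$. Let $R>0$, and let $\eta_1,\dots,\eta_m$, $\beta$ be real numbers (in the paper: $\sum_i x_i^2\le R$, $g_i\le\eta_i$, $-p\le\beta$ on $S$). For a polynomial $q$ in $x$ of degree at most $2d$, $y^{2d}q(x/y)$ denotes its homogenization to a form of degree $2d$ in $(x,y)$. For $\gamma\in\mathbb{R}$ define the form in the variables $z=(x,s,y)=(x_1,\dots,x_n,s_0,\dots,s_{m+1},y)$: $$f_\gamma(x,s,y)=\big(\gamma y^{2d}-y^{2d}p(x/y)-s_0^2y^{2d-2}\big)^2+\sum_{i=1}^m\big(y^{2d}g_i(x/y)-s_i^2y^{2d-2}\big)^2+\Big(\big(R+\textstyle\sum_{i=1}^m\eta_i+\beta+\gamma\big)^d y^{2d}-\big(\sum_{i=1}^n x_i^2+\sum_{i=0}^m s_i^2\big)^d-s_{m+1}^{2d}\Big)^2.$$ Set $N=n+m+3$ and $D=2d$, so $f_\gamma$ is a form of degree $2D$ in $N$ variables. $f_\gamma(v^2-w^2)$ denotes $f_\gamma(v_1^2-w_1^2,\dots,v_N^2-w_N^2)$. A form is positive definite if it is positive at every nonzero point. For a form $f$ of degree $k$ in $n'$ variables, write $f(x)=\sum_{|\alpha|=k}b_\alpha c(\alpha)x^\alpha$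 with $c(\alpha)=\frac{k!}{\alpha_1!\cdots\alpha_{n'}!}$; define $\|f\|=\max_{|\alpha|=k}|b_\alpha|$. *)

theory Defs
  imports "HOL-Analysis.Analysis" "HOL-Library.Poly_Mapping"
begin

text \<open>Real multivariate polynomials in variables x_0, x_1, ... are represented as
  finitely supported maps from monomials (exponent vectors) to coefficients.\<close>
type_synonym rpoly = "(nat \<Rightarrow>\<^sub>0 nat) \<Rightarrow>\<^sub>0 real"

definition mdeg :: "(nat \<Rightarrow>\<^sub>0 nat) \<Rightarrow> nat" where
  "mdeg mm = (\<Sum>i\<in>Poly_Mapping.keys mm. Poly_Mapping.lookup mm i)"

definition rpoly_deg :: "rpoly \<Rightarrow> nat" where
  "rpoly_deg P = Max (insert 0 (mdeg ` Poly_Mapping.keys P))"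

definition monom_eval :: "(nat \<Rightarrow>\<^sub>0 nat) \<Rightarrow> (nat \<Rightarrow> real) \<Rightarrow> real" where
  "monom_eval mm x = (\<Prod>i\<in>Poly_Mapping.keys mm. x i ^ Poly_Mapping.lookup mm i)"

text \<open>Homogenization to degree k: the form y^k P(x/y) (for deg P \<le> k).\<close>
definition hom_eval :: "nat \<Rightarrow> rpoly \<Rightarrow> (nat \<Rightarrow> real) \<Rightarrow> real \<Rightarrow> real" where
  "hom_eval k P x y = (\<Sum>mm\<in>Poly_Mapping.keys P. Poly_Mapping.lookup P mm * monom_eval mm x * y ^ (k - mdeg mm))"

text \<open>The form f_gamma in the variables z = (x_1..x_n, s_0..s_{m+1}, y), stored as
  z 0..z(n-1) = x, z(n+i) = s_i, z(n+m+2) = y.  The polynomials g_i are g 1 .. g m.\<close>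
definition f_gamma :: "nat \<Rightarrow> nat \<Rightarrow> rpoly \<Rightarrow> (nat \<Rightarrow> rpoly) \<Rightarrow> real \<Rightarrow> (nat \<Rightarrow> real)
    \<Rightarrow> real \<Rightarrow> nat \<Rightarrow> real \<Rightarrow> (nat \<Rightarrow> real) \<Rightarrow> real" where
  "f_gamma n m p g R eta beta d gamma z =
     (let x = (\<lambda>i. if i < n then z i else 0); s = (\<lambda>i. z (n + i)); y = z (n + m + 2) in
       (gamma * y ^ (2*d) - hom_eval (2*d) p x y - (s 0)\<^sup>2 * y ^ (2*d - 2))\<^sup>2
     + (\<Sum>i=1..m. (hom_eval (2*d) (g i) x y - (s i)\<^sup>2 * y ^ (2*d - 2))\<^sup>2)
     + ((R + (\<Sum>i=1..m. eta i) + beta + gamma) ^ d * y ^ (2*d)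
          - ((\<Sum>i<n. (x i)\<^sup>2) + (\<Sum>i\<le>m. (s i)\<^sup>2)) ^ d - (s (m+1)) ^ (2*d))\<^sup>2)"

definition multi_indices :: "nat \<Rightarrow> nat \<Rightarrow> (nat \<Rightarrow> nat) set" where
  "multi_indices n' k = {\<alpha>. (\<forall>i\<ge>n'. \<alpha> i = 0) \<and> (\<Sum>i<n'. \<alpha> i) = k}"

definition multinom :: "nat \<Rightarrow> nat \<Rightarrow> (nat \<Rightarrow> nat) \<Rightarrow> real" where
  "multinom n' k \<alpha> = fact k / (\<Prod>i<n'. fact (\<alpha> i))"

definition form_coeffs :: "nat \<Rightarrow> nat \<Rightarrow> ((nat \<Rightarrow> real) \<Rightarrow> real) \<Rightarrow> (nat \<Rightarrow> nat) \<Rightarrow> real" where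
  "form_coeffs n' k f = (THE b. (\<forall>\<alpha>. \<alpha> \<notin> multi_indices n' k \<longrightarrow> b \<alpha> = 0) \<and>
      (\<forall>x. f x = (\<Sum>\<alpha>\<in>multi_indices n' k. b \<alpha> * multinom n' k \<alpha> * (\<Prod>i<n'. x i ^ \<alpha> i))))"

definition form_norm :: "nat \<Rightarrow> nat \<Rightarrow> ((nat \<Rightarrow> real) \<Rightarrow> real) \<Rightarrow> real" where
  "form_norm n' k f = Max ((\<lambda>\<alpha>. \<bar>form_coeffs n' k f \<alpha>\<bar>) ` multi_indices n' k)"

text \<open>(v,w) \<in> R^{2N} is stored as u with v_i = u i, w_i = u (N+i), i < N.\<close>
definition p_gr :: "nat \<Rightarrow> nat \<Rightarrow> ((nat \<Rightarrow> real) \<Rightarrow> real) \<Rightarrow> nat \<Rightarrow> (nat \<Rightarrow> real) \<Rightarrow> real" where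
  "p_gr N D f r u = f (\<lambda>i. (u i)\<^sup>2 - (u (N+i))\<^sup>2)
     - 1 / real r * (\<Sum>i<N. ((u i)\<^sup>2 - (u (N+i))\<^sup>2)\<^sup>2) ^ D
     + 1 / (2 * real r) * (\<Sum>i<N. (u i) ^ 4 + (u (N+i)) ^ 4) ^ D"

text \<open>q_{gamma,r}(v,w) = p_{gamma,r}(sqrt v, sqrt w), written as the form obtained by
  substituting v_i for v_i^2 and w_i for w_i^2.\<close>
definition q_gr :: "nat \<Rightarrow> nat \<Rightarrow> ((nat \<Rightarrow> real) \<Rightarrow> real) \<Rightarrow> nat \<Rightarrow> (nat \<Rightarrow> real) \<Rightarrow> real" where
  "q_gr N D f r u = f (\<lambda>i. u i - u (N+i))
     - 1 / real r * (\<Sum>i<N. (u i - u (N+i))\<^sup>2) ^ D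
     + 1 / (2 * real r) * (\<Sum>i<N. (u i)\<^sup>2 + (u (N+i))\<^sup>2) ^ D"

definition mu_r :: "nat \<Rightarrow> nat \<Rightarrow> ((nat \<Rightarrow> real) \<Rightarrow> real) \<Rightarrow> nat \<Rightarrow> real" where
  "mu_r N D f r = Inf {p_gr N D f r u | u. (\<Sum>i<2*N. (u i)\<^sup>2) = 1}"

definition Nbar :: "nat \<Rightarrow> nat \<Rightarrow> ((nat \<Rightarrow> real) \<Rightarrow> real) \<Rightarrow> nat \<Rightarrow> real" where
  "Nbar N D f r = real D * (2 * real D - 1) * form_norm (2*N) (2*D) (q_gr N D f r) / mu_r N D f r
     - 2 * real D"

end

theory Submission
  imports Defs
begin


definition mon :: "nat \<Rightarrow> (nat \<Rightarrow> nat) \<Rightarrow> (nat \<Rightarrow> real) \<Rightarrow> real" where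
  "mon n' \<alpha> x = (\<Prod>i<n'. x i ^ \<alpha> i)"

definition hpl :: "nat \<Rightarrow> nat \<Rightarrow> ((nat \<Rightarrow> real) \<Rightarrow> real) \<Rightarrow> bool" where
  "hpl n' k f \<longleftrightarrow> (\<exists>L. snd ` set L \<subseteq> multi_indices n' k \<and>
      (\<forall>x. f x = (\<Sum>(c,\<alpha>)\<leftarrow>L. c * mon n' \<alpha> x)))"

lemma hpl_zero: "hpl n' k (\<lambda>x. 0)"
  unfolding hpl_def by (rule exI[of _ "[]"]) simp

lemma hpl_add: assumes "hpl n' k f" "hpl n' k g" shows "hpl n' k (\<lambda>x. f x + g x)"
proof -
  obtain L1 where 1: "snd ` set L1 \<subseteq> multi_indices n' k" "\<forall>x. f x = (\<Sum>(c,\<alpha>)\<leftarrow>L1. c * mon n' \<alpha> x)"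
    using assms(1) unfolding hpl_def by blast
  obtain L2 where 2: "snd ` set L2 \<subseteq> multi_indices n' k" "\<forall>x. g x = (\<Sum>(c,\<alpha>)\<leftarrow>L2. c * mon n' \<alpha> x)"
    using assms(2) unfolding hpl_def by blast
  show ?thesis unfolding hpl_def
    by (rule exI[of _ "L1 @ L2"]) (use 1 2 in auto)
qed

lemma hpl_cmult: assumes "hpl n' k f" shows "hpl n' k (\<lambda>x. a * f x)"
proof -
  obtain L1 where 1: "snd ` set L1 \<subseteq> multi_indices n' k" "\<forall>x. f x = (\<Sum>(c,\<alpha>)\<leftarrow>L1. c * mon n' \<alpha> x)"
    using assms(1) unfolding hpl_def by blast
  have "a * (\<Sum>(c,\<alpha>)\<leftarrow>L1. c * mon n' \<alpha> x) = (\<Sum>(c,\<alpha>)\<leftarrow>map (\<lambda>(c,\<alpha>). (a*c,\<alpha>)) L1. c * mon n' \<alpha> x)" for x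
    by (induction L1) (auto simp: algebra_simps)
  then show ?thesis unfolding hpl_def
    by (intro exI[of _ "map (\<lambda>(c,\<alpha>). (a*c,\<alpha>)) L1"]) (use 1 in force)
qed

lemma hpl_diff: assumes "hpl n' k f" "hpl n' k g" shows "hpl n' k (\<lambda>x. f x - g x)"
  using hpl_add[OF assms(1) hpl_cmult[OF assms(2), of "-1"]] by simp

lemma hpl_cong: "hpl n' k f \<Longrightarrow> k = k' \<Longrightarrow> (\<And>x. f x = g x) \<Longrightarrow> hpl n' k' g"
  by (metis ext)

lemma mon_add: "mon n' (\<lambda>i. \<alpha> i + \<beta> i) x = mon n' \<alpha> x * mon n' \<beta> x"
  unfolding mon_def by (simp add: power_add prod.distrib)

lemma mi_add: "\<alpha> \<in> multi_indices n' k \<Longrightarrow> \<beta> \<in> multi_indices n' l \<Longrightarrow> (\<lambda>i. \<alpha> i + \<beta> i) \<in> multi_indices n' (k+l)"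
  unfolding multi_indices_def by (simp add: sum.distrib)

lemma hpl_mult: assumes "hpl n' k f" "hpl n' l g" shows "hpl n' (k+l) (\<lambda>x. f x * g x)"
proof -
  obtain L1 where 1: "snd ` set L1 \<subseteq> multi_indices n' k" "\<forall>x. f x = (\<Sum>(c,\<alpha>)\<leftarrow>L1. c * mon n' \<alpha> x)"
    using assms(1) unfolding hpl_def by blast
  obtain L2 where 2: "snd ` set L2 \<subseteq> multi_indices n' l" "\<forall>x. g x = (\<Sum>(c,\<alpha>)\<leftarrow>L2. c * mon n' \<alpha> x)"
    using assms(2) unfolding hpl_def by blast
  define L where "L = concat (map (\<lambda>(c,\<alpha>). map (\<lambda>(c',\<beta>). (c*c', \<lambda>i. \<alpha> i + \<beta> i)) L2) L1)"
  have s: "snd ` set L \<subseteq> multi_indices n' (k+l)"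
    using 1(1) 2(1) unfolding L_def by (force intro: mi_add)
  have e: "(\<Sum>(c,\<alpha>)\<leftarrow>L1. c * mon n' \<alpha> x) * (\<Sum>(c,\<alpha>)\<leftarrow>L2. c * mon n' \<alpha> x)
      = (\<Sum>(c,\<alpha>)\<leftarrow>concat (map (\<lambda>(c,\<alpha>). map (\<lambda>(c',\<beta>). (c*c', \<lambda>i. \<alpha> i + \<beta> i)) L2) L1). c * mon n' \<alpha> x)" for x
  proof (induction L1)
    case Nil then show ?case by simp
  next
    case (Cons a L1)
    obtain c \<alpha> where a: "a = (c,\<alpha>)" by fastforce
    have "c * mon n' \<alpha> x * (\<Sum>(c,\<alpha>)\<leftarrow>L2. c * mon n' \<alpha> x) =
        (\<Sum>(c',\<beta>)\<leftarrow>map (\<lambda>(c',\<beta>). (c*c', \<lambda>i. \<alpha> i + \<beta> i)) L2. c' * mon n' \<beta> x)"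
      by (induction L2) (auto simp: algebra_simps mon_add)
    then show ?case using Cons a by (simp add: algebra_simps)
  qed
  show ?thesis unfolding hpl_def
    by (rule exI[of _ L]) (use s e 1 2 in \<open>auto simp: L_def\<close>)
qed

lemma hpl_const: "hpl n' 0 (\<lambda>x. a)"
proof -
  have "(\<lambda>i. 0::nat) \<in> multi_indices n' 0" unfolding multi_indices_def by simp
  then show ?thesis unfolding hpl_def
    by (intro exI[of _ "[(a, \<lambda>i. 0)]"]) (simp add: mon_def)
qed

lemma hpl_var: assumes "i < n'" shows "hpl n' 1 (\<lambda>x. x i)"
proof -
  have "(\<lambda>j. if j = i then 1 else 0::nat) \<in> multi_indices n' 1"
    using assms unfolding multi_indices_def by auto
  moreover have "mon n' (\<lambda>j. if j = i then 1 else 0) x = x i" for x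
  proof -
    have "mon n' (\<lambda>j. if j = i then 1 else 0) x = (\<Prod>j<n'. if j = i then x j else 1)"
      unfolding mon_def by (intro prod.cong) auto
    also have "\<dots> = x i" using assms by (simp add: prod.delta)
    finally show ?thesis .
  qed
  ultimately show ?thesis unfolding hpl_def
    by (intro exI[of _ "[(1, \<lambda>j. if j = i then 1 else 0)]"]) simp
qed

lemma hpl_pow: assumes "hpl n' k f" shows "hpl n' (k*j) (\<lambda>x. f x ^ j)"
proof (induction j)
  case 0 then show ?case using hpl_const[of n' 1] by simp
next
  case (Suc j)
  show ?case using hpl_mult[OF assms Suc] by (simp add: algebra_simps)
qed

lemma hpl_sum: assumes "finite S" "\<And>s. s \<in> S \<Longrightarrow> hpl n' k (F s)" shows "hpl n' k (\<lambda>x. \<Sum>s\<in>S. F s x)"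
  using assms by (induction S rule: finite_induct) (auto intro: hpl_zero hpl_add)

lemma hpl_prod: assumes "finite S" "\<And>s. s \<in> S \<Longrightarrow> hpl n' (dg s) (F s)"
  shows "hpl n' (\<Sum>s\<in>S. dg s) (\<lambda>x. \<Prod>s\<in>S. F s x)"
  using assms by (induction S rule: finite_induct) (auto intro: hpl_const hpl_mult)



lemma mdeg_le_deg: "mm \<in> Poly_Mapping.keys P \<Longrightarrow> mdeg mm \<le> rpoly_deg P"
  unfolding rpoly_deg_def by (intro Max_ge) auto

lemma hpl_hom:
  assumes vars: "\<forall>mm\<in>Poly_Mapping.keys P. Poly_Mapping.keys mm \<subseteq> {..<n}"
    and deg: "rpoly_deg P \<le> k"
    and Lz: "\<And>i. i < n \<Longrightarrow> hpl M 1 (Lz i)" and Y: "hpl M 1 Y"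
  shows "hpl M k (\<lambda>u. hom_eval k P (\<lambda>i. if i < n then Lz i u else 0) (Y u))"
  unfolding hom_eval_def
proof (rule hpl_sum)
  fix mm assume mm: "mm \<in> Poly_Mapping.keys P"
  have md: "mdeg mm \<le> k" using mdeg_le_deg[OF mm] deg by simp
  have h1: "hpl M (mdeg mm) (\<lambda>u. monom_eval mm (\<lambda>i. if i < n then Lz i u else 0))"
  proof -
    have "hpl M (\<Sum>i\<in>Poly_Mapping.keys mm. Poly_Mapping.lookup mm i) (\<lambda>u. \<Prod>i\<in>Poly_Mapping.keys mm. (if i < n then Lz i u else 0) ^ Poly_Mapping.lookup mm i)"
    proof (rule hpl_prod[of "Poly_Mapping.keys mm" M "Poly_Mapping.lookup mm" "\<lambda>i u. (if i < n then Lz i u else 0) ^ Poly_Mapping.lookup mm i"])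
      fix i assume i: "i \<in> Poly_Mapping.keys mm"
      then have "i < n" using vars mm by auto
      then show "hpl M (Poly_Mapping.lookup mm i) (\<lambda>u. (if i < n then Lz i u else 0) ^ Poly_Mapping.lookup mm i)"
        using hpl_pow[OF Lz[OF \<open>i < n\<close>], of "Poly_Mapping.lookup mm i"] by simp
    qed simp
    then show ?thesis unfolding monom_eval_def mdeg_def .
  qed
  have h2: "hpl M (mdeg mm + 1 * (k - mdeg mm)) (\<lambda>u. monom_eval mm (\<lambda>i. if i < n then Lz i u else 0) * Y u ^ (k - mdeg mm))"
    by (rule hpl_mult[OF h1 hpl_pow[OF Y]])
  show "hpl M k (\<lambda>u. Poly_Mapping.lookup P mm * monom_eval mm (\<lambda>i. if i < n then Lz i u else 0) * Y u ^ (k - mdeg mm))"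
    using hpl_cmult[OF h2, of "Poly_Mapping.lookup P mm"] md by (simp add: mult.assoc)
qed simp

lemma hpl_fgamma:
  assumes vars_p: "\<forall>mm\<in>Poly_Mapping.keys p. Poly_Mapping.keys mm \<subseteq> {..<n}"
    and vars_g: "\<forall>i\<in>{1..m}. \<forall>mm\<in>Poly_Mapping.keys (g i). Poly_Mapping.keys mm \<subseteq> {..<n}"
    and d_def: "d = max 1 ((Max (insert (rpoly_deg p) (rpoly_deg ` g ` {1..m})) + 1) div 2)"
    and Lz: "\<And>i. i < n + m + 3 \<Longrightarrow> hpl M 1 (Lz i)"
  shows "hpl M (4*d) (\<lambda>u. f_gamma n m p g R eta beta d gamma (\<lambda>i. Lz i u))"
proof -
  define Mx where "Mx = Max (insert (rpoly_deg p) (rpoly_deg ` g ` {1..m}))"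
  have d1: "d \<ge> 1" using d_def by simp
  have dM: "Mx \<le> 2*d" using d_def unfolding Mx_def[symmetric] by linarith
  have degp: "rpoly_deg p \<le> 2*d" using dM unfolding Mx_def
    by (meson Max_ge dual_order.trans finite.insertI finite_atLeastAtMost finite_imageI insertI1)
  have degg: "rpoly_deg (g i) \<le> 2*d" if "i \<in> {1..m}" for i using dM that unfolding Mx_def
    by (meson Max_ge dual_order.trans finite.insertI finite_atLeastAtMost finite_imageI insertI2 imageI)
  have Lx: "\<And>i. i < n \<Longrightarrow> hpl M 1 (Lz i)" using Lz by simp
  have Y: "hpl M 1 (Lz (n+m+2))" using Lz by simp
  have S: "\<And>i. i \<le> m + 1 \<Longrightarrow> hpl M 1 (Lz (n+i))" using Lz by simp
  have y2d: "hpl M (2*d) (\<lambda>u. Lz (n+m+2) u ^ (2*d))" using hpl_pow[OF Y, of "2*d"] by simp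
  have sy: "hpl M (2*d) (\<lambda>u. (Lz (n+i) u)\<^sup>2 * Lz (n+m+2) u ^ (2*d-2))" if "i \<le> m+1" for i
    using hpl_cong[OF hpl_mult[OF hpl_pow[OF S[OF that], of 2] hpl_pow[OF Y, of "2*d-2"]]] d1 by simp
  have T1: "hpl M (4*d) (\<lambda>u. (gamma * Lz (n+m+2) u ^ (2*d)
      - hom_eval (2*d) p (\<lambda>i. if i < n then Lz i u else 0) (Lz (n+m+2) u)
      - (Lz (n+0) u)\<^sup>2 * Lz (n+m+2) u ^ (2*d-2))\<^sup>2)"
  proof -
    have a: "hpl M (2*d) (\<lambda>u. gamma * Lz (n+m+2) u ^ (2*d))" by (rule hpl_cmult[OF y2d])
    have b: "hpl M (2*d) (\<lambda>u. hom_eval (2*d) p (\<lambda>i. if i < n then Lz i u else 0) (Lz (n+m+2) u))"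
      by (rule hpl_hom[OF vars_p degp Lx Y])
    have c: "hpl M (2*d) (\<lambda>u. (Lz (n+0) u)\<^sup>2 * Lz (n+m+2) u ^ (2*d-2))" by (rule sy) simp
    show ?thesis using hpl_pow[OF hpl_diff[OF hpl_diff[OF a b] c], of 2]
      by (simp add: mult.commute)
  qed
  have T2: "hpl M (4*d) (\<lambda>u. \<Sum>i=1..m. (hom_eval (2*d) (g i) (\<lambda>i. if i < n then Lz i u else 0) (Lz (n+m+2) u)
      - (Lz (n+i) u)\<^sup>2 * Lz (n+m+2) u ^ (2*d-2))\<^sup>2)"
  proof (rule hpl_sum)
    fix i assume i: "i \<in> {1..m}"
    show "hpl M (4*d) (\<lambda>u. (hom_eval (2*d) (g i) (\<lambda>i. if i < n then Lz i u else 0) (Lz (n+m+2) u)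
      - (Lz (n+i) u)\<^sup>2 * Lz (n+m+2) u ^ (2*d-2))\<^sup>2)"
    proof -
      have b: "hpl M (2*d) (\<lambda>u. hom_eval (2*d) (g i) (\<lambda>i. if i < n then Lz i u else 0) (Lz (n+m+2) u))"
        by (rule hpl_hom[OF _ degg[OF i] Lx Y]) (use vars_g i in auto)
      have c: "hpl M (2*d) (\<lambda>u. (Lz (n+i) u)\<^sup>2 * Lz (n+m+2) u ^ (2*d-2))" by (rule sy) (use i in simp)
      show ?thesis using hpl_pow[OF hpl_diff[OF b c], of 2] by (simp add: mult.commute)
    qed
  qed simp
  have sq: "hpl M 2 (\<lambda>u. (Lz i u)\<^sup>2)" if "i < n+m+3" for i using hpl_pow[OF Lz[OF that], of 2] by simp
  have inner: "hpl M 2 (\<lambda>u. (\<Sum>i<n. (if i < n then Lz i u else 0)\<^sup>2) + (\<Sum>i\<le>m. (Lz (n+i) u)\<^sup>2))"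
    by (intro hpl_add hpl_sum) (auto intro!: sq hpl_cong[OF sq])
  have T3: "hpl M (4*d) (\<lambda>u. ((R + (\<Sum>i=1..m. eta i) + beta + gamma) ^ d * Lz (n+m+2) u ^ (2*d)
          - ((\<Sum>i<n. (if i < n then Lz i u else 0)\<^sup>2) + (\<Sum>i\<le>m. (Lz (n+i) u)\<^sup>2)) ^ d - (Lz (n+(m+1)) u) ^ (2*d))\<^sup>2)"
  proof -
    have a: "hpl M (2*d) (\<lambda>u. (R + (\<Sum>i=1..m. eta i) + beta + gamma) ^ d * Lz (n+m+2) u ^ (2*d))"
      by (rule hpl_cmult[OF y2d])
    have b: "hpl M (2*d) (\<lambda>u. ((\<Sum>i<n. (if i < n then Lz i u else 0)\<^sup>2) + (\<Sum>i\<le>m. (Lz (n+i) u)\<^sup>2)) ^ d)"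
      using hpl_pow[OF inner, of d] by simp
    have c: "hpl M (2*d) (\<lambda>u. (Lz (n+(m+1)) u) ^ (2*d))"
      using hpl_pow[OF S[of "m+1"], of "2*d"] by simp
    show ?thesis using hpl_pow[OF hpl_diff[OF hpl_diff[OF a b] c], of 2] by (simp add: mult.commute)
  qed
  show ?thesis
    unfolding f_gamma_def Let_def
    using hpl_add[OF hpl_add[OF T1 T2] T3] by (simp add: add.assoc)
qed



lemma mi_finite: "finite (multi_indices n' k)"
proof -
  have "multi_indices n' k \<subseteq> (\<lambda>h i. if i < n' then h i else 0) ` (PiE {..<n'} (\<lambda>_. {..k}))"
  proof
    fix \<alpha> assume a: "\<alpha> \<in> multi_indices n' k"
    have le: "\<alpha> i \<le> k" if "i < n'" for i
    proof -
      have "\<alpha> i \<le> (\<Sum>j<n'. \<alpha> j)" by (rule member_le_sum) (use that in auto)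
      then show ?thesis using a unfolding multi_indices_def by simp
    qed
    have "\<alpha> = (\<lambda>i. if i < n' then restrict \<alpha> {..<n'} i else 0)"
      using a unfolding multi_indices_def by (auto simp: fun_eq_iff)
    moreover have "restrict \<alpha> {..<n'} \<in> PiE {..<n'} (\<lambda>_. {..k})" using le by auto
    ultimately show "\<alpha> \<in> (\<lambda>h i. if i < n' then h i else 0) ` (PiE {..<n'} (\<lambda>_. {..k}))" by blast
  qed
  moreover have "finite (PiE {..<n'} (\<lambda>_. {..k::nat}))" by (rule finite_PiE) auto
  ultimately show ?thesis by (meson finite_imageI finite_subset)
qed

lemma multinom_pos: "multinom n' k \<alpha> > 0"
  unfolding multinom_def by (intro divide_pos_pos prod_pos) auto

lemma mon_upd: "mon (Suc n') \<alpha> (x(n' := t)) = mon n' \<alpha> x * t ^ \<alpha> n'"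
  unfolding mon_def by (simp add: prod.lessThan_Suc)

lemma mon_upd0: "mon n' (\<alpha>(n' := j)) x = mon n' \<alpha> x"
  unfolding mon_def by (intro prod.cong) auto

lemma poly_unique:
  assumes "finite A" "\<forall>\<alpha>\<in>A. \<forall>i\<ge>n'. \<alpha> i = 0" "\<forall>x. (\<Sum>\<alpha>\<in>A. e \<alpha> * mon n' \<alpha> x) = 0"
  shows "\<forall>\<alpha>\<in>A. e \<alpha> = 0"
  using assms
proof (induction n' arbitrary: A e)
  case 0
  then have A: "A \<subseteq> {\<lambda>i. 0}" by (auto simp: fun_eq_iff)
  show ?case
  proof (cases "A = {}")
    case False
    then have "A = {\<lambda>i. 0}" using A by blast
    then show ?thesis using 0(3) by (simp add: mon_def)
  qed simp
next
  case (Suc n' A e)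
  define Jm where "Jm = Max ((\<lambda>\<alpha>. \<alpha> n') ` A)"
  have Jm: "\<alpha> n' \<le> Jm" if "\<alpha> \<in> A" for \<alpha> unfolding Jm_def using that Suc(2) by auto
  have coef: "(\<Sum>\<alpha>\<in>{\<alpha>\<in>A. \<alpha> n' = j}. e \<alpha> * mon n' \<alpha> x) = 0" if "j \<le> Jm" for j x
  proof -
    have "\<forall>t. (\<Sum>j\<le>Jm. (\<Sum>\<alpha>\<in>{\<alpha>\<in>A. \<alpha> n' = j}. e \<alpha> * mon n' \<alpha> x) * t ^ j) = 0"
    proof
      fix t
      have "(\<Sum>j\<le>Jm. (\<Sum>\<alpha>\<in>{\<alpha>\<in>A. \<alpha> n' = j}. e \<alpha> * mon n' \<alpha> x) * t ^ j)
          = (\<Sum>j\<le>Jm. (\<Sum>\<alpha>\<in>{\<alpha>\<in>A. \<alpha> n' = j}. e \<alpha> * (mon n' \<alpha> x * t ^ \<alpha> n')))"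
        by (simp add: sum_distrib_right mult.assoc)
      also have "\<dots> = (\<Sum>\<alpha>\<in>A. e \<alpha> * (mon n' \<alpha> x * t ^ \<alpha> n'))"
        by (rule sum.group) (use Suc(2) Jm in auto)
      also have "\<dots> = (\<Sum>\<alpha>\<in>A. e \<alpha> * mon (Suc n') \<alpha> (x(n' := t)))"
        by (simp add: mon_upd)
      also have "\<dots> = 0" using Suc(4) by blast
      finally show "(\<Sum>j\<le>Jm. (\<Sum>\<alpha>\<in>{\<alpha>\<in>A. \<alpha> n' = j}. e \<alpha> * mon n' \<alpha> x) * t ^ j) = 0" .
    qed
    then show ?thesis using polyfun_eq_0[of "\<lambda>j. (\<Sum>\<alpha>\<in>{\<alpha>\<in>A. \<alpha> n' = j}. e \<alpha> * mon n' \<alpha> x)" Jm] that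
      by blast
  qed
  show ?case
  proof
    fix \<alpha> assume a: "\<alpha> \<in> A"
    define j where "j = \<alpha> n'"
    define Aj where "Aj = (\<lambda>\<beta>. \<beta>(n' := 0)) ` {\<alpha>\<in>A. \<alpha> n' = j}"
    have inj: "inj_on (\<lambda>\<beta>. \<beta>(n' := 0)) {\<alpha>\<in>A. \<alpha> n' = j}"
    proof (rule inj_onI)
      fix \<beta> \<gamma> assume "\<beta> \<in> {\<alpha>\<in>A. \<alpha> n' = j}" "\<gamma> \<in> {\<alpha>\<in>A. \<alpha> n' = j}" "\<beta>(n' := 0) = \<gamma>(n' := 0)"
      then show "\<beta> = \<gamma>" by (auto simp: fun_eq_iff) (metis fun_upd_apply)
    qed
    have "\<forall>\<beta>\<in>Aj. e (\<beta>(n' := j)) = 0"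
    proof (rule Suc.IH)
      show "finite Aj" unfolding Aj_def using Suc(2) by simp
      show "\<forall>\<beta>\<in>Aj. \<forall>i\<ge>n'. \<beta> i = 0" unfolding Aj_def using Suc(3) by auto
      show "\<forall>x. (\<Sum>\<beta>\<in>Aj. e (\<beta>(n' := j)) * mon n' \<beta> x) = 0"
      proof
        fix x
        have "(\<Sum>\<beta>\<in>Aj. e (\<beta>(n' := j)) * mon n' \<beta> x) = (\<Sum>\<beta>\<in>{\<alpha>\<in>A. \<alpha> n' = j}. e (\<beta>(n' := 0, n' := j)) * mon n' (\<beta>(n' := 0)) x)"
          unfolding Aj_def by (subst sum.reindex[OF inj]) simp
        also have "\<dots> = (\<Sum>\<beta>\<in>{\<alpha>\<in>A. \<alpha> n' = j}. e \<beta> * mon n' \<beta> x)"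
          by (intro sum.cong refl) (auto simp: mon_upd0 fun_upd_idem)
        also have "\<dots> = 0" using coef[of j x] Jm[OF a] j_def by simp
        finally show "(\<Sum>\<beta>\<in>Aj. e (\<beta>(n' := j)) * mon n' \<beta> x) = 0" .
      qed
    qed
    moreover have "\<alpha>(n' := 0) \<in> Aj" unfolding Aj_def using a j_def by auto
    ultimately show "e \<alpha> = 0" using j_def by (metis fun_upd_triv fun_upd_upd)
  qed
qed

definition crep :: "nat \<Rightarrow> nat \<Rightarrow> ((nat \<Rightarrow> real) \<Rightarrow> real) \<Rightarrow> ((nat \<Rightarrow> nat) \<Rightarrow> real) \<Rightarrow> bool" where
  "crep n' k f b \<longleftrightarrow> (\<forall>\<alpha>. \<alpha> \<notin> multi_indices n' k \<longrightarrow> b \<alpha> = 0) \<and>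
      (\<forall>x. f x = (\<Sum>\<alpha>\<in>multi_indices n' k. b \<alpha> * multinom n' k \<alpha> * (\<Prod>i<n'. x i ^ \<alpha> i)))"

lemma crep_unique: assumes "crep n' k f b" "crep n' k f b'" shows "b = b'"
proof -
  have "\<forall>\<alpha>\<in>multi_indices n' k. (b \<alpha> - b' \<alpha>) * multinom n' k \<alpha> = 0"
  proof (rule poly_unique[OF mi_finite])
    show "\<forall>\<alpha>\<in>multi_indices n' k. \<forall>i\<ge>n'. \<alpha> i = 0" unfolding multi_indices_def by auto
    show "\<forall>x. (\<Sum>\<alpha>\<in>multi_indices n' k. (b \<alpha> - b' \<alpha>) * multinom n' k \<alpha> * mon n' \<alpha> x) = 0"
      using assms unfolding crep_def mon_def by (simp add: algebra_simps sum_subtractf)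
  qed
  then show ?thesis using assms multinom_pos[of n' k] unfolding crep_def
    by (auto simp: fun_eq_iff) (metis less_numeral_extra(3) mult_eq_0_iff right_minus_eq)
qed

lemma form_coeffs_eq: "crep n' k f b \<Longrightarrow> form_coeffs n' k f = b"
  unfolding form_coeffs_def using crep_unique
  by (intro the_equality) (auto simp: crep_def)

lemma hpl_crep: assumes "hpl n' k f" shows "\<exists>b. crep n' k f b"
proof -
  obtain L where L: "snd ` set L \<subseteq> multi_indices n' k" "\<forall>x. f x = (\<Sum>(c,\<alpha>)\<leftarrow>L. c * mon n' \<alpha> x)"
    using assms unfolding hpl_def by blast
  define b where "b \<alpha> = (if \<alpha> \<in> multi_indices n' k then (\<Sum>(c,\<beta>)\<leftarrow>L. if \<beta> = \<alpha> then c else 0) / multinom n' k \<alpha> else 0)" for \<alpha>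
  have key: "snd ` set L \<subseteq> multi_indices n' k \<Longrightarrow> (\<Sum>\<alpha>\<in>multi_indices n' k. (\<Sum>(c,\<beta>)\<leftarrow>L. if \<beta> = \<alpha> then c else 0) * mon n' \<alpha> x)
     = (\<Sum>(c,\<alpha>)\<leftarrow>L. c * mon n' \<alpha> x)" for x
  proof (induction L)
    case Nil then show ?case by simp
  next
    case (Cons a L)
    obtain c \<beta> where a: "a = (c, \<beta>)" by fastforce
    have "(\<Sum>\<alpha>\<in>multi_indices n' k. (\<Sum>(c,\<beta>)\<leftarrow>a#L. if \<beta> = \<alpha> then c else 0) * mon n' \<alpha> x)
       = (\<Sum>\<alpha>\<in>multi_indices n' k. (if \<beta> = \<alpha> then c * mon n' \<alpha> x else 0)) +
         (\<Sum>\<alpha>\<in>multi_indices n' k. (\<Sum>(c,\<beta>)\<leftarrow>L. if \<beta> = \<alpha> then c else 0) * mon n' \<alpha> x)"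
      by (auto simp: a distrib_right sum.distrib intro!: sum.cong)
    also have "\<dots> = c * mon n' \<beta> x + (\<Sum>(c,\<alpha>)\<leftarrow>L. c * mon n' \<alpha> x)"
      using Cons mi_finite[of n' k] a by (simp add: sum.delta)
    finally show ?case using a by simp
  qed
  have "crep n' k f b"
    unfolding crep_def
  proof (intro conjI allI impI)
    fix \<alpha> assume "\<alpha> \<notin> multi_indices n' k" then show "b \<alpha> = 0" by (simp add: b_def)
  next
    fix x
    have "(\<Sum>\<alpha>\<in>multi_indices n' k. b \<alpha> * multinom n' k \<alpha> * (\<Prod>i<n'. x i ^ \<alpha> i))
       = (\<Sum>\<alpha>\<in>multi_indices n' k. (\<Sum>(c,\<beta>)\<leftarrow>L. if \<beta> = \<alpha> then c else 0) * mon n' \<alpha> x)"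
      using multinom_pos[of n' k] by (intro sum.cong refl) (simp add: b_def mon_def less_imp_neq[symmetric])
    then show "f x = (\<Sum>\<alpha>\<in>multi_indices n' k. b \<alpha> * multinom n' k \<alpha> * (\<Prod>i<n'. x i ^ \<alpha> i))"
      using key[OF L(1)] L(2) by simp
  qed
  then show ?thesis by blast
qed



lemma crep_local: "crep n' k f b \<Longrightarrow> (\<And>i. i < n' \<Longrightarrow> x i = y i) \<Longrightarrow> f x = f y"
  unfolding crep_def by simp

lemma crep_hom: assumes "crep n' k f b" shows "f (\<lambda>i. s * x i) = s ^ k * f x"
proof -
  have "(\<Prod>i<n'. (s * x i) ^ \<alpha> i) = s ^ k * (\<Prod>i<n'. x i ^ \<alpha> i)" if "\<alpha> \<in> multi_indices n' k" for \<alpha>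
  proof -
    have "(\<Prod>i<n'. (s * x i) ^ \<alpha> i) = s ^ (\<Sum>i<n'. \<alpha> i) * (\<Prod>i<n'. x i ^ \<alpha> i)"
      by (simp add: power_mult_distrib prod.distrib power_sum)
    then show ?thesis using that unfolding multi_indices_def by simp
  qed
  then show ?thesis using assms unfolding crep_def
    by (simp add: sum_distrib_left algebra_simps)
qed

lemma crep_cont: assumes "crep n' k f b" shows "continuous_on UNIV f"
proof -
  have "f = (\<lambda>x. \<Sum>\<alpha>\<in>multi_indices n' k. b \<alpha> * multinom n' k \<alpha> * (\<Prod>i<n'. x i ^ \<alpha> i))"
    using assms unfolding crep_def by auto
  moreover have "continuous_on UNIV (\<lambda>x::nat\<Rightarrow>real. \<Sum>\<alpha>\<in>multi_indices n' k. b \<alpha> * multinom n' k \<alpha> * (\<Prod>i<n'. x i ^ \<alpha> i))"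
    by (intro continuous_intros continuous_on_product_coordinates)
  ultimately show ?thesis by simp
qed

lemma compact_box: "compact (PiE (UNIV::nat set) (\<lambda>i. if i < n' then {-1..1::real} else {0}))"
proof -
  have "compactin (product_topology (\<lambda>i. euclidean) UNIV) (PiE (UNIV::nat set) (\<lambda>i. if i < n' then {-1..1::real} else {0}))"
    by (subst compactin_PiE) auto
  then show ?thesis by (simp add: euclidean_product_topology)
qed

lemma crep_lower:
  assumes cr: "crep n' (2*e) f b" and n'0: "n' > 0" and e0: "e > 0"
    and pos: "\<forall>z. (\<exists>i < n'. z i \<noteq> 0) \<longrightarrow> f z > 0"
  shows "\<exists>c>0. \<forall>t. f t \<ge> c * (\<Sum>i<n'. (t i)\<^sup>2) ^ e"
proof -
  define K where "K = PiE (UNIV::nat set) (\<lambda>i. if i < n' then {-1..1::real} else {0}) \<inter> {z. (\<Sum>i<n'. (z i)\<^sup>2) = 1}"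
  have "closed {z::nat\<Rightarrow>real. (\<Sum>i<n'. (z i)\<^sup>2) = 1}"
    by (intro closed_Collect_eq continuous_intros continuous_on_product_coordinates)
  then have cK: "compact K" unfolding K_def by (intro compact_Int_closed compact_box)
  have "(\<Sum>i<n'. (if i = 0 then 1 else 0::real)\<^sup>2) = (\<Sum>i<n'. if i = 0 then 1 else 0)"
    by (intro sum.cong) auto
  then have "(\<Sum>i<n'. (if i = 0 then 1 else 0::real)\<^sup>2) = 1" using n'0 by simp
  then have z0: "(\<lambda>i. if i = 0 then 1 else 0::real) \<in> K" unfolding K_def using n'0
    by auto
  have ne: "K \<noteq> {}" using z0 by blast
  obtain zs where zs: "zs \<in> K" "\<forall>y\<in>K. f zs \<le> f y"
    using continuous_attains_inf[OF cK ne continuous_on_subset[OF crep_cont[OF cr]]] by blast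
  have "\<exists>i<n'. zs i \<noteq> 0"
  proof (rule ccontr)
    assume "\<not> ?thesis"
    then have "(\<Sum>i<n'. (zs i)\<^sup>2) = 0" by simp
    then show False using zs(1) unfolding K_def by simp
  qed
  then have cpos: "f zs > 0" using pos by blast
  have "f t \<ge> f zs * (\<Sum>i<n'. (t i)\<^sup>2) ^ e" for t
  proof -
    define S where "S = (\<Sum>i<n'. (t i)\<^sup>2)"
    have S0: "S \<ge> 0" unfolding S_def by (intro sum_nonneg) auto
    show ?thesis
    proof (cases "S = 0")
      case True
      have "f t = f (\<lambda>i. 0 * t i)"
        using True unfolding S_def by (intro crep_local[OF cr]) (simp add: sum_nonneg_eq_0_iff)
      also have "\<dots> = 0" using crep_hom[OF cr, of 0 t] e0 by simp
      finally have ft: "f t = 0" .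
      have "f zs * S ^ e = 0" using True e0 by simp
      then show ?thesis using ft unfolding S_def by linarith
    next
      case False
      then have Sp: "S > 0" using S0 by simp
      define z' where "z' = (\<lambda>i. if i < n' then t i / sqrt S else 0)"
      have sq: "(sqrt S)\<^sup>2 = S" using S0 by simp
      have sumz: "(\<Sum>i<n'. (z' i)\<^sup>2) = 1"
      proof -
        have "(\<Sum>i<n'. (z' i)\<^sup>2) = (\<Sum>i<n'. (t i)\<^sup>2 / S)"
        proof (rule sum.cong[OF refl])
          fix i assume "i \<in> {..<n'}"
          then have "z' i = t i / sqrt S" by (simp add: z'_def)
          then show "(z' i)\<^sup>2 = (t i)\<^sup>2 / S" by (simp only: power_divide sq)
        qed
        also have "\<dots> = (\<Sum>i<n'. (t i)\<^sup>2) / S" by (rule sum_divide_distrib[symmetric])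
        also have "\<dots> = 1" using Sp unfolding S_def by simp
        finally show ?thesis .
      qed
      have "z' \<in> K"
      proof -
        have "z' i \<in> {-1..1}" if "i < n'" for i
        proof -
          have "(z' i)\<^sup>2 \<le> (\<Sum>i<n'. (z' i)\<^sup>2)" by (rule member_le_sum) (use that in auto)
          then have "(z' i)\<^sup>2 \<le> 1" using sumz by simp
          then have "\<bar>z' i\<bar> \<le> 1" by (simp add: abs_square_le_1)
          then show ?thesis by (simp add: abs_le_iff)
        qed
        moreover have "z' i = 0" if "\<not> i < n'" for i using that by (simp add: z'_def)
        ultimately have "z' \<in> PiE (UNIV::nat set) (\<lambda>i. if i < n' then {-1..1::real} else {0})"
          unfolding PiE_iff by auto
        then show ?thesis unfolding K_def using sumz by blast
      qed
      then have fz: "f z' \<ge> f zs" using zs by blast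
      have "f t = f (\<lambda>i. sqrt S * z' i)"
        using Sp by (intro crep_local[OF cr]) (simp add: z'_def)
      also have "\<dots> = sqrt S ^ (2*e) * f z'" by (rule crep_hom[OF cr])
      also have "sqrt S ^ (2*e) = S ^ e" using S0 by (simp add: power_mult)
      finally have "f t = S ^ e * f z'" .
      then show ?thesis using fz S0 unfolding S_def[symmetric]
        by (simp add: mult.commute mult_right_mono)
    qed
  qed
  then show ?thesis using cpos by blast
qed



lemma mi_nonempty: "n' > 0 \<Longrightarrow> multi_indices n' k \<noteq> {}"
proof -
  assume "n' > 0"
  then have "(\<lambda>i. if i = 0 then k else 0) \<in> multi_indices n' k"
    unfolding multi_indices_def by auto
  then show ?thesis by blast
qed

lemma pigeon:
  fixes u :: "nat \<Rightarrow> real"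
  assumes "M > 0" "(\<Sum>i<M. (u i)\<^sup>2) = 1"
  shows "\<exists>j<M. (u j)\<^sup>2 \<ge> 1 / real M"
proof (rule ccontr)
  assume "\<not> ?thesis"
  then have "\<forall>j\<in>{..<M}. (u j)\<^sup>2 < 1 / real M" by auto
  then have "(\<Sum>i<M. (u i)\<^sup>2) < (\<Sum>i<M. 1 / real M)"
    using assms(1) by (intro sum_strict_mono) auto
  also have "\<dots> = 1" using assms(1) by simp
  finally show False using assms(2) by simp
qed

lemma W_lower:
  fixes u :: "nat \<Rightarrow> real"
  assumes "N > 0" "(\<Sum>i<2*N. (u i)\<^sup>2) = 1"
  shows "(\<Sum>i<N. (u i) ^ 4 + (u (N+i)) ^ 4) \<ge> (1 / real (2*N))\<^sup>2"
proof -
  obtain j where j: "j < 2*N" "(u j)\<^sup>2 \<ge> 1 / real (2*N)" using pigeon[OF _ assms(2)] assms(1) by auto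
  have uj: "(u j) ^ 4 \<ge> (1 / real (2*N))\<^sup>2"
  proof -
    have "(1 / real (2*N))\<^sup>2 \<le> ((u j)\<^sup>2)\<^sup>2" by (rule power_mono[OF j(2)]) simp
    then show ?thesis by (simp add: power_mult[symmetric])
  qed
  have "(u j) ^ 4 \<le> (\<Sum>i<N. (u i) ^ 4 + (u (N+i)) ^ 4)"
  proof (cases "j < N")
    case True
    have "(u j) ^ 4 \<le> (u j) ^ 4 + (u (N+j)) ^ 4" by simp
    also have "\<dots> \<le> (\<Sum>i<N. (u i) ^ 4 + (u (N+i)) ^ 4)"
      by (rule member_le_sum[of j "{..<N}" "\<lambda>i. (u i) ^ 4 + (u (N+i)) ^ 4"]) (use True in auto)
    finally show ?thesis .
  next
    case False
    define i' where "i' = j - N"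
    have i': "i' < N" "j = N + i'" using False j(1) unfolding i'_def by auto
    have "(u j) ^ 4 \<le> (u i') ^ 4 + (u (N+i')) ^ 4" using i' by simp
    also have "\<dots> \<le> (\<Sum>i<N. (u i) ^ 4 + (u (N+i)) ^ 4)"
      by (rule member_le_sum[of i' "{..<N}" "\<lambda>i. (u i) ^ 4 + (u (N+i)) ^ 4"]) (use i' in auto)
    finally show ?thesis .
  qed
  then show ?thesis using uj by linarith
qed

theorem lemma4p3:
  fixes n m d :: nat and p :: rpoly and g :: "nat \<Rightarrow> rpoly"
    and R beta gamma :: real and eta :: "nat \<Rightarrow> real"
  assumes vars_p: "\<forall>mm\<in>Poly_Mapping.keys p. Poly_Mapping.keys mm \<subseteq> {..<n}"
    and vars_g: "\<forall>i\<in>{1..m}. \<forall>mm\<in>Poly_Mapping.keys (g i). Poly_Mapping.keys mm \<subseteq> {..<n}"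
    and d_def: "d = max 1 ((Max (insert (rpoly_deg p) (rpoly_deg ` g ` {1..m})) + 1) div 2)"
    and R_pos: "R > 0"
    and posdef: "\<forall>z. (\<exists>i < n + m + 3. z i \<noteq> 0) \<longrightarrow> f_gamma n m p g R eta beta d gamma z > 0"
  shows "\<exists>rhat::nat. rhat > 0 \<and> (\<forall>r\<ge>rhat.
           mu_r (n + m + 3) (2*d) (f_gamma n m p g R eta beta d gamma) r > 0 \<and>
           real r ^ 2 \<ge> Nbar (n + m + 3) (2*d) (f_gamma n m p g R eta beta d gamma) r)"
proof -
  define N where "N = n + m + 3"
  define D where "D = 2*d"
  define F where "F = f_gamma n m p g R eta beta d gamma"
  have d1: "d \<ge> 1" using d_def by simp
  have N0: "N > 0" unfolding N_def by simp
  have hF: "hpl N (2*D) F"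
    using hpl_fgamma[OF vars_p vars_g d_def, of N "\<lambda>i u. u i" R eta beta gamma] hpl_var
    unfolding F_def N_def D_def by (simp add: mult.commute)
  obtain bF where bF: "crep N (2*D) F bF" using hpl_crep[OF hF] by blast
  obtain c where c: "c > 0" "\<forall>t. F t \<ge> c * (\<Sum>i<N. (t i)\<^sup>2) ^ D"
    using crep_lower[OF bF N0] posdef d1 unfolding F_def N_def D_def by auto
  define Q0 where "Q0 = (\<lambda>u. F (\<lambda>i. u i - u (N+i)))"
  define Q1 where "Q1 = (\<lambda>u::nat\<Rightarrow>real. (\<Sum>i<N. (u i - u (N+i))\<^sup>2) ^ D)"
  define Q2 where "Q2 = (\<lambda>u::nat\<Rightarrow>real. (\<Sum>i<N. (u i)\<^sup>2 + (u (N+i))\<^sup>2) ^ D)"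
  have lin: "hpl (2*N) 1 (\<lambda>u. u i - u (N+i))" if "i < N" for i
    using that by (intro hpl_diff hpl_var) auto
  have h0: "hpl (2*N) (2*D) Q0"
    using hpl_fgamma[OF vars_p vars_g d_def, of "2*N" "\<lambda>i u. u i - u (N+i)" R eta beta gamma] lin
    unfolding Q0_def F_def N_def D_def by (simp add: mult.commute)
  have sq1: "hpl (2*N) 2 (\<lambda>u. (\<Sum>i<N. (u i - u (N+i))\<^sup>2))"
    by (rule hpl_sum) (use hpl_pow[OF lin, of _ 2] in auto)
  have h1: "hpl (2*N) (2*D) Q1" unfolding Q1_def using hpl_pow[OF sq1, of D] .
  have sq2: "hpl (2*N) 2 (\<lambda>u. (\<Sum>i<N. (u i)\<^sup>2 + (u (N+i))\<^sup>2))"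
  proof (rule hpl_sum)
    fix i assume "i \<in> {..<N}"
    then have "i < 2*N" "N + i < 2*N" by auto
    then show "hpl (2*N) 2 (\<lambda>u. (u i)\<^sup>2 + (u (N+i))\<^sup>2)"
      using hpl_pow[OF hpl_var, of _ "2*N" 2] by (intro hpl_add) auto
  qed simp
  have h2: "hpl (2*N) (2*D) Q2" unfolding Q2_def using hpl_pow[OF sq2, of D] .
  obtain b0 where b0: "crep (2*N) (2*D) Q0 b0" using hpl_crep[OF h0] by blast
  obtain b1 where b1: "crep (2*N) (2*D) Q1 b1" using hpl_crep[OF h1] by blast
  obtain b2 where b2: "crep (2*N) (2*D) Q2 b2" using hpl_crep[OF h2] by blast
  define MI where "MI = multi_indices (2*N) (2*D)"
  have MIf: "finite MI" unfolding MI_def by (rule mi_finite)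
  have MIne: "MI \<noteq> {}" unfolding MI_def using N0 by (intro mi_nonempty) simp
  define KK where "KK = (\<Sum>\<alpha>\<in>MI. \<bar>b0 \<alpha>\<bar> + \<bar>b1 \<alpha>\<bar> + \<bar>b2 \<alpha>\<bar>)"
  have KK0: "KK \<ge> 0" unfolding KK_def by (intro sum_nonneg) auto
  have norm_le: "form_norm (2*N) (2*D) (q_gr N D F r) \<le> KK" if r1: "r \<ge> 1" for r
  proof -
    define bR where "bR \<alpha> = b0 \<alpha> - 1 / real r * b1 \<alpha> + 1 / (2 * real r) * b2 \<alpha>" for \<alpha>
    have qeq: "q_gr N D F r u = Q0 u - 1 / real r * Q1 u + 1 / (2 * real r) * Q2 u" for u
      unfolding q_gr_def Q0_def Q1_def Q2_def by simp
    have "crep (2*N) (2*D) (q_gr N D F r) bR"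
      unfolding crep_def
    proof (intro conjI allI impI)
      fix \<alpha> assume "\<alpha> \<notin> multi_indices (2*N) (2*D)"
      then show "bR \<alpha> = 0" using b0 b1 b2 unfolding crep_def bR_def by simp
    next
      fix x
      show "q_gr N D F r x = (\<Sum>\<alpha>\<in>multi_indices (2*N) (2*D). bR \<alpha> * multinom (2*N) (2*D) \<alpha> * (\<Prod>i<2*N. x i ^ \<alpha> i))"
        using b0 b1 b2 unfolding qeq crep_def bR_def
        by (simp add: algebra_simps sum.distrib sum_subtractf sum_distrib_left)
    qed
    then have fc: "form_coeffs (2*N) (2*D) (q_gr N D F r) = bR" by (rule form_coeffs_eq)
    have "\<bar>bR \<alpha>\<bar> \<le> KK" if "\<alpha> \<in> MI" for \<alpha>
    proof -
      have r0: "real r \<ge> 1" using r1 by simp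
      have "\<bar>bR \<alpha>\<bar> \<le> \<bar>b0 \<alpha>\<bar> + \<bar>1 / real r * b1 \<alpha>\<bar> + \<bar>1 / (2 * real r) * b2 \<alpha>\<bar>"
        unfolding bR_def by linarith
      also have "\<bar>1 / real r * b1 \<alpha>\<bar> \<le> \<bar>b1 \<alpha>\<bar>"
        using r0 by (simp add: abs_mult divide_le_eq_1 field_simps mult_le_cancel_right1)
      also have "\<bar>1 / (2 * real r) * b2 \<alpha>\<bar> \<le> \<bar>b2 \<alpha>\<bar>"
      proof -
        have "\<bar>b2 \<alpha>\<bar> \<le> real r * (\<bar>b2 \<alpha>\<bar> * 2)"
          using r0 mult_mono[of 1 "real r" "\<bar>b2 \<alpha>\<bar>" "\<bar>b2 \<alpha>\<bar>*2"] by simp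
        then show ?thesis using r0 by (simp add: abs_mult field_simps)
      qed
      also have "\<bar>b0 \<alpha>\<bar> + \<bar>b1 \<alpha>\<bar> + \<bar>b2 \<alpha>\<bar> \<le> KK"
        unfolding KK_def by (rule member_le_sum) (use that MIf in auto)
      finally show ?thesis by simp
    qed
    then show ?thesis unfolding form_norm_def fc MI_def[symmetric]
      using MIf MIne by (intro Max.boundedI) auto
  qed
  define \<delta> where "\<delta> = ((1 / real (2*N))\<^sup>2) ^ D"
  have \<delta>0: "\<delta> > 0" unfolding \<delta>_def using N0 by simp
  have p_low: "p_gr N D F r u \<ge> \<delta> / (2 * real r)"
    if r0: "r > 0" and rc: "real r \<ge> 1 / c" and u: "(\<Sum>i<2*N. (u i)\<^sup>2) = 1" for r u
  proof -
    define T where "T = (\<Sum>i<N. ((u i)\<^sup>2 - (u (N+i))\<^sup>2)\<^sup>2)"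
    define W where "W = (\<Sum>i<N. (u i) ^ 4 + (u (N+i)) ^ 4)"
    have T0: "T ^ D \<ge> 0" unfolding T_def by (rule zero_le_power, rule sum_nonneg) auto
    have Ft: "F (\<lambda>i. (u i)\<^sup>2 - (u (N+i))\<^sup>2) \<ge> c * T ^ D" using spec[OF c(2), of "\<lambda>i. (u i)\<^sup>2 - (u (N+i))\<^sup>2"] unfolding T_def by simp
    have "1 \<le> real r * c" using rc c(1) by (simp add: divide_le_eq)
    then have "1 / real r \<le> c" using r0 by (simp add: divide_le_eq mult.commute)
    then have "1 / real r * T ^ D \<le> c * T ^ D" using T0 by (rule mult_right_mono)
    have W: "W \<ge> (1 / real (2*N))\<^sup>2" unfolding W_def by (rule W_lower[OF N0 u])
    then have "W ^ D \<ge> \<delta>" unfolding \<delta>_def by (intro power_mono) auto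
    then have "1 / (2 * real r) * W ^ D \<ge> \<delta> / (2 * real r)" using r0 by (simp add: divide_right_mono)
    moreover have "p_gr N D F r u = F (\<lambda>i. (u i)\<^sup>2 - (u (N+i))\<^sup>2) - 1 / real r * T ^ D + 1 / (2 * real r) * W ^ D"
      unfolding p_gr_def T_def W_def by simp
    ultimately show ?thesis using Ft \<open>1 / real r * T ^ D \<le> c * T ^ D\<close> by linarith
  qed
  have mu_low: "mu_r N D F r \<ge> \<delta> / (2 * real r)" if r0: "r > 0" and rc: "real r \<ge> 1 / c" for r
    unfolding mu_r_def
  proof (rule cInf_greatest)
    define u0 where "u0 = (\<lambda>i::nat. if i = 0 then 1 else 0::real)"
    have "(\<Sum>i<2*N. (u0 i)\<^sup>2) = (\<Sum>i<2*N. if i = 0 then 1 else 0)"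
      unfolding u0_def by (intro sum.cong) auto
    also have "\<dots> = 1" using N0 by simp
    finally show "{p_gr N D F r u |u. (\<Sum>i<2 * N. (u i)\<^sup>2) = 1} \<noteq> {}" by blast
  next
    fix x assume "x \<in> {p_gr N D F r u |u. (\<Sum>i<2 * N. (u i)\<^sup>2) = 1}"
    then show "\<delta> / (2 * real r) \<le> x" using p_low[OF r0 rc] by blast
  qed
  define A where "A = real D * (2 * real D - 1) * (2 * KK / \<delta>)"
  define rhat where "rhat = max 1 (max (nat \<lceil>1 / c\<rceil>) (nat \<lceil>A\<rceil>))"
  have main: "mu_r N D F r > 0 \<and> real r ^ 2 \<ge> Nbar N D F r" if r: "r \<ge> rhat" for r
  proof -
    have r1: "r \<ge> 1" using r unfolding rhat_def by simp
    then have r0: "r > 0" by simp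
    have rc: "real r \<ge> 1 / c"
    proof -
      have "nat \<lceil>1 / c\<rceil> \<le> r" using r unfolding rhat_def by simp
      then show ?thesis by linarith
    qed
    have rA: "real r \<ge> A"
    proof -
      have "nat \<lceil>A\<rceil> \<le> r" using r unfolding rhat_def by simp
      then show ?thesis by linarith
    qed
    have ml: "mu_r N D F r \<ge> \<delta> / (2 * real r)" by (rule mu_low[OF r0 rc])
    have dr: "\<delta> / (2 * real r) > 0" using \<delta>0 r0 by simp
    have mpos: "mu_r N D F r > 0" using ml dr by linarith
    have nl: "form_norm (2*N) (2*D) (q_gr N D F r) \<le> KK" by (rule norm_le[OF r1])
    have "form_norm (2*N) (2*D) (q_gr N D F r) / mu_r N D F r \<le> KK / mu_r N D F r"
      using nl mpos by (rule divide_right_mono[OF _ less_imp_le])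
    also have "KK / mu_r N D F r \<le> KK / (\<delta> / (2 * real r))"
      by (rule divide_left_mono[OF ml KK0 mult_pos_pos[OF mpos dr]])
    also have "KK / (\<delta> / (2 * real r)) = real r * (2 * KK / \<delta>)" using r0 \<delta>0 by (simp add: field_simps)
    finally have q: "form_norm (2*N) (2*D) (q_gr N D F r) / mu_r N D F r \<le> real r * (2 * KK / \<delta>)" .
    have Dc: "real D * (2 * real D - 1) \<ge> 0" unfolding D_def using d1 by simp
    have "Nbar N D F r \<le> real D * (2 * real D - 1) * (form_norm (2*N) (2*D) (q_gr N D F r) / mu_r N D F r)"
      unfolding Nbar_def by simp
    also have "\<dots> \<le> real D * (2 * real D - 1) * (real r * (2 * KK / \<delta>))"
      by (rule mult_left_mono[OF q Dc])
    also have "\<dots> = real r * A" unfolding A_def by simp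
    also have "\<dots> \<le> real r * real r" using rA by (intro mult_left_mono) auto
    also have "\<dots> = real r ^ 2" by (simp add: power2_eq_square)
    finally show ?thesis using mpos by simp
  qed
  show ?thesis
    by (rule exI[of _ rhat]) (use main in \<open>auto simp: rhat_def N_def D_def F_def\<close>)
qed


end
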